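(* Let $p(a,b\mid x_0,x_1,y,y')$ be a non-signalling racbox. Define a two-input, two-output box $q$ by fixing Alice's first input to $0$ and Bob's second input to $0$: $$q(a,b\mid x,y) := p(a,b\mid x_0=0,\ x_1=x,\ y,\ y'=0), \qquad x,y\in\{0,1\}.$$ Then $q$ is the PR-box, that is, for all $x,y,a,b\in\{0,1\}$, $$q(a,b\mid x,y)=\begin{cases}\tfrac12 & \text{if } a\oplus b = xy,\\ 0 & \text{otherwise.}\end{cases}$$
   Context: A box is a family of conditional probability distributions $p(a,b\mid x_0,x_1,y,y')$ with $a,b,x_0,x_1,y,y'\in\{0,1\}$. Alice holds inputs $x_0,x_1$ and output $a$; Bob holds inputs $y,y'$ and output $b$. A racbox is a box with two properties. First, it is non-signalling from Bob to Alice: $p(a\mid x_0,x_1,y,y')$ does not depend on $(y,y')$. Second, whenever $a=y'$ one has $b=x_y$ with certainty. A racbox is non-signalling if, in addition, Bob's marginal $p(b\mid x_0,x_1,y,y')$ does not depend on $(x_0,x_1)$. *)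

theory Defs
  imports Complex_Main
begin

text \<open>Bits are encoded as bool (False = 0, True = 1).
  A box p a b x0 x1 y y' is the probability p(a,b | x0,x1,y,y').\<close>

type_synonym box = "bool \<Rightarrow> bool \<Rightarrow> bool \<Rightarrow> bool \<Rightarrow> bool \<Rightarrow> bool \<Rightarrow> real"

definition is_box :: "box \<Rightarrow> bool" where
  "is_box p \<longleftrightarrow>
     (\<forall>a b x0 x1 y y'. p a b x0 x1 y y' \<ge> 0) \<and>
     (\<forall>x0 x1 y y'. (\<Sum>a\<in>UNIV. \<Sum>b\<in>UNIV. p a b x0 x1 y y') = 1)"

definition alice_marg :: "box \<Rightarrow> bool \<Rightarrow> bool \<Rightarrow> bool \<Rightarrow> bool \<Rightarrow> bool \<Rightarrow> real" where
  "alice_marg p a x0 x1 y y' = (\<Sum>b\<in>UNIV. p a b x0 x1 y y')"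

definition bob_marg :: "box \<Rightarrow> bool \<Rightarrow> bool \<Rightarrow> bool \<Rightarrow> bool \<Rightarrow> bool \<Rightarrow> real" where
  "bob_marg p b x0 x1 y y' = (\<Sum>a\<in>UNIV. p a b x0 x1 y y')"

definition sel :: "bool \<Rightarrow> bool \<Rightarrow> bool \<Rightarrow> bool" where
  "sel x0 x1 y = (if y then x1 else x0)"

definition is_racbox :: "box \<Rightarrow> bool" where
  "is_racbox p \<longleftrightarrow> is_box p \<and>
     (\<forall>a x0 x1 y y' z z'. alice_marg p a x0 x1 y y' = alice_marg p a x0 x1 z z') \<and>
     (\<forall>x0 x1 y y' b. b \<noteq> sel x0 x1 y \<longrightarrow> p y' b x0 x1 y y' = 0)"

definition is_ns_racbox :: "box \<Rightarrow> bool" where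
  "is_ns_racbox p \<longleftrightarrow> is_racbox p \<and>
     (\<forall>b x0 x1 z0 z1 y y'. bob_marg p b x0 x1 y y' = bob_marg p b z0 z1 y y')"

end

theory Submission
  imports Defs
begin

theorem mainTheorem2:
  fixes p :: box
  assumes "is_ns_racbox p"
  defines "q \<equiv> (\<lambda>a b x y. p a b False x y False)"
  shows "\<forall>x y a b. q a b x y = (if (a \<noteq> b) = (x \<and> y) then 1/2 else 0)"
proof -
  have nn: "\<And>a b x0 x1 y y'. p a b x0 x1 y y' \<ge> 0"
    and sm0: "\<And>x0 x1 y y'. (\<Sum>a\<in>UNIV. \<Sum>b\<in>UNIV. p a b x0 x1 y y') = 1"
    and al0: "\<And>a x0 x1 y y' z z'. alice_marg p a x0 x1 y y' = alice_marg p a x0 x1 z z'"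
    and rc0: "\<And>x0 x1 y y' b. b \<noteq> sel x0 x1 y \<Longrightarrow> p y' b x0 x1 y y' = 0"
    and bo0: "\<And>b x0 x1 z0 z1 y y'. bob_marg p b x0 x1 y y' = bob_marg p b z0 z1 y y'"
    using assms(1) unfolding is_ns_racbox_def is_racbox_def is_box_def by auto
  have sm: "\<And>x0 x1 y y'. p False False x0 x1 y y' + p False True x0 x1 y y' + p True False x0 x1 y y' + p True True x0 x1 y y' = 1"
    using sm0 by (simp add: UNIV_bool add.assoc)
  define \<alpha> where "\<alpha> x0 x1 = p True False x0 x1 False False + p True True x0 x1 False False" for x0 x1
  have al: "\<And>x0 x1 y y'. p True False x0 x1 y y' + p True True x0 x1 y y' = \<alpha> x0 x1"
    using al0 by (simp add: UNIV_bool alice_marg_def \<alpha>_def)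
  have rc: "p y' (\<not> (if y then x1 else x0)) x0 x1 y y' = 0" for x0 x1 y y'
    using rc0[of "\<not> (if y then x1 else x0)" x0 x1 y y'] by (simp add: sel_def)
  define B where "B b x0 x1 y y' = p False b x0 x1 y y' + p True b x0 x1 y y'" for b x0 x1 y y'
  have bo: "\<And>b x0 x1 y y'. B b x0 x1 y y' = B b False False y y'"
    using bo0 by (simp add: UNIV_bool bob_marg_def B_def)
  have bsum: "B False x0 x1 y y' + B True x0 x1 y y' = 1" for x0 x1 y y'
    using sm[of x0 x1 y y'] unfolding B_def by linarith
  have LB0: "B (if y then x1 else x0) x0 x1 y False \<ge> 1 - \<alpha> x0 x1" for x0 x1 y
  proof -
    have r: "p False (\<not> (if y then x1 else x0)) x0 x1 y False = 0" by (rule rc)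
    show ?thesis
      using r sm[of x0 x1 y False] al[of x0 x1 y False] nn[of True "if y then x1 else x0" x0 x1 y False]
      unfolding B_def by (cases y; cases x0; cases x1) auto
  qed
  have LB1: "B (if y then x1 else x0) x0 x1 y True \<ge> \<alpha> x0 x1" for x0 x1 y
  proof -
    have r: "p True (\<not> (if y then x1 else x0)) x0 x1 y True = 0" by (rule rc)
    show ?thesis
      using r al[of x0 x1 y True] nn[of False "if y then x1 else x0" x0 x1 y True]
      unfolding B_def by (cases y; cases x0; cases x1) auto
  qed
  have yF: "\<alpha> b x1 = 1 - B b False False False False \<and> \<alpha> False x1 + \<alpha> True x1 = 1" for b x1
  proof -
    have "B False False x1 False False \<ge> 1 - \<alpha> False x1" using LB0[of False x1 False] by simp
    moreover have "B True True x1 False False \<ge> 1 - \<alpha> True x1" using LB0[of True x1 False] by simp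
    moreover have "B False False x1 False True \<ge> \<alpha> False x1" using LB1[of False x1 False] by simp
    moreover have "B True True x1 False True \<ge> \<alpha> True x1" using LB1[of True x1 False] by simp
    ultimately show ?thesis
      using bo[of False False x1 False False] bo[of True True x1 False False]
        bo[of False False x1 False True] bo[of True True x1 False True]
        bsum[of False False False False] bsum[of False False False True]
      by (cases b) auto
  qed
  have yT: "\<alpha> x0 b = 1 - B b False False True False \<and> \<alpha> x0 False + \<alpha> x0 True = 1" for b x0
  proof -
    have "B False x0 False True False \<ge> 1 - \<alpha> x0 False" using LB0[of x0 False True] by simp
    moreover have "B True x0 True True False \<ge> 1 - \<alpha> x0 True" using LB0[of x0 True True] by simp
    moreover have "B False x0 False True True \<ge> \<alpha> x0 False" using LB1[of x0 False True] by simp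
    moreover have "B True x0 True True True \<ge> \<alpha> x0 True" using LB1[of x0 True True] by simp
    ultimately show ?thesis
      using bo[of False x0 False True False] bo[of True x0 True True False]
        bo[of False x0 False True True] bo[of True x0 True True True]
        bsum[of False False True False] bsum[of False False True True]
      by (cases b) auto
  qed
  have ahalf: "\<alpha> x0 x1 = 1/2" for x0 x1
    using yF[of False False] yF[of False True] yF[of True False] yF[of True True]
      yT[of False False] yT[of False True] yT[of True False] yT[of True True]
    by (cases x0; cases x1) auto
  have bhalf: "B b False False y False = 1/2" for b y
  proof -
    have "B False False False y False \<ge> 1/2" using LB0[of False False y] bo[of False False False y False] ahalf by simp
    moreover have "B True False False y False \<ge> 1/2" using LB0[of True True y] bo[of True True True y False] ahalf by simp
    ultimately show ?thesis using bsum[of False False y False] by (cases b) auto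
  qed
  show ?thesis
  proof (intro allI)
    fix x y a b
    let ?s = "x \<and> y"
    have s: "(if y then x else False) = ?s" by simp
    have r0: "p False (\<not> ?s) False x y False = 0" using rc[of False y x False] by (cases x; cases y) simp_all
    have A: "p True False False x y False + p True True False x y False = 1/2" using al[of False x y False] ahalf by simp
    have S: "p False False False x y False + p False True False x y False + p True False False x y False + p True True False x y False = 1" using sm by simp
    have Bs: "B ?s False x y False = 1/2" using bo[of ?s False x y False] bhalf by simp
    have Bn: "B (\<not> ?s) False x y False = 1/2" using bo[of "\<not> ?s" False x y False] bhalf by simp
    show "q a b x y = (if (a \<noteq> b) = (x \<and> y) then 1/2 else 0)"
      using r0 A S Bs Bn unfolding q_def B_def
      by (cases a; cases b; cases x; cases y) auto
  qed
qed

end
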